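(* Let $F$ be a nondyadic nonarchimedean local field, $A$ a quaternion $F$-algebra, and $\mathcal O$ a Bass $O_F$-order in $A$ with Eichler invariant $e(\mathcal O)=0$. Then $\mathrm{Nr}(\mathcal O^\times)=O_F^{\times2}$.
   Context: Nondyadic means the residue characteristic is not $2$. An order is Gorenstein if its trace dual is projective as a left $\mathcal O$-module, and Bass if every overorder (including itself) is Gorenstein. With $\mathfrak k$ the residue field, the Eichler invariant of $\mathcal O\not\simeq M_2(O_F)$ is $1,0,-1$ according as $\mathcal O/J(\mathcal O)$ ($J$ = Jacobson radical) is $\mathfrak k\times\mathfrak k$, $\mathfrak k$, or the quadratic field extension of $\mathfrak k$. $\mathrm{Nr}$ is the reduced norm. *)

theory Defs
  imports Main
begin

text \<open>A normalised discrete valuation on a field is given by v :: 'a => int on the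
nonzero elements (the value of v at 0 is irrelevant; v(0) = infinity by convention).\<close>

definition discrete_valuation :: "('a::field \<Rightarrow> int) \<Rightarrow> bool" where
  "discrete_valuation v \<longleftrightarrow>
     (\<forall>x y. x \<noteq> 0 \<longrightarrow> y \<noteq> 0 \<longrightarrow> v (x * y) = v x + v y) \<and>
     (\<forall>x y. x \<noteq> 0 \<longrightarrow> y \<noteq> 0 \<longrightarrow> x + y \<noteq> 0 \<longrightarrow> v (x + y) \<ge> min (v x) (v y)) \<and>
     (\<exists>p. p \<noteq> 0 \<and> v p = 1)"

definition OF :: "('a::field \<Rightarrow> int) \<Rightarrow> 'a set" where
  "OF v = {x. x = 0 \<or> v x \<ge> 0}"

definition PF :: "('a::field \<Rightarrow> int) \<Rightarrow> 'a set" where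
  "PF v = {x. x = 0 \<or> v x > 0}"

definition OF_units :: "('a::field \<Rightarrow> int) \<Rightarrow> 'a set" where
  "OF_units v = {x. x \<noteq> 0 \<and> v x = 0}"

definition vclose :: "('a::field \<Rightarrow> int) \<Rightarrow> int \<Rightarrow> 'a \<Rightarrow> 'a \<Rightarrow> bool" where
  "vclose v N x y \<longleftrightarrow> x = y \<or> v (x - y) \<ge> N"

definition v_complete :: "('a::field \<Rightarrow> int) \<Rightarrow> bool" where
  "v_complete v \<longleftrightarrow>
     (\<forall>s :: nat \<Rightarrow> 'a. (\<forall>N. \<exists>M. \<forall>m\<ge>M. \<forall>n\<ge>M. vclose v N (s m) (s n)) \<longrightarrow>
        (\<exists>L. \<forall>N. \<exists>M. \<forall>n\<ge>M. vclose v N (s n) L))"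

definition finite_residue_field :: "('a::field \<Rightarrow> int) \<Rightarrow> bool" where
  "finite_residue_field v \<longleftrightarrow>
     (\<exists>S. finite S \<and> S \<subseteq> OF v \<and> (\<forall>x\<in>OF v. \<exists>s\<in>S. x - s \<in> PF v))"

definition nonarch_local_field :: "('a::field \<Rightarrow> int) \<Rightarrow> bool" where
  "nonarch_local_field v \<longleftrightarrow> discrete_valuation v \<and> v_complete v \<and> finite_residue_field v"

text \<open>nondyadic: residue characteristic is not 2, i.e. 2 is a unit of O_F\<close>
definition nondyadic :: "('a::field \<Rightarrow> int) \<Rightarrow> bool" where
  "nondyadic v \<longleftrightarrow> (2::'a) \<in> OF_units v"

text \<open>Since char F is not 2 (F nondyadic), every quaternion F-algebra is (a,b)_F with a,b nonzero:
basis 1,i,j,k=ij with i^2 = a, j^2 = b, ij = -ji.  Elements are coordinate 4-tuples.\<close>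

type_synonym 'a quat = "'a \<times> 'a \<times> 'a \<times> 'a"

fun qadd :: "'a::field quat \<Rightarrow> 'a quat \<Rightarrow> 'a quat" where
  "qadd (x0,x1,x2,x3) (y0,y1,y2,y3) = (x0+y0, x1+y1, x2+y2, x3+y3)"

fun qneg :: "'a::field quat \<Rightarrow> 'a quat" where
  "qneg (x0,x1,x2,x3) = (-x0, -x1, -x2, -x3)"

fun qsmul :: "'a::field \<Rightarrow> 'a quat \<Rightarrow> 'a quat" where
  "qsmul c (x0,x1,x2,x3) = (c*x0, c*x1, c*x2, c*x3)"

definition qzero :: "'a::field quat" where "qzero = (0,0,0,0)"
definition qone :: "'a::field quat" where "qone = (1,0,0,0)"

fun qmul :: "'a::field \<Rightarrow> 'a \<Rightarrow> 'a quat \<Rightarrow> 'a quat \<Rightarrow> 'a quat" where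
  "qmul a b (x0,x1,x2,x3) (y0,y1,y2,y3) =
     (x0*y0 + a*x1*y1 + b*x2*y2 - a*b*x3*y3,
      x0*y1 + x1*y0 - b*x2*y3 + b*x3*y2,
      x0*y2 + x2*y0 + a*x1*y3 - a*x3*y1,
      x0*y3 + x3*y0 + x1*y2 - x2*y1)"

fun nrd :: "'a::field \<Rightarrow> 'a \<Rightarrow> 'a quat \<Rightarrow> 'a" where
  "nrd a b (x0,x1,x2,x3) = x0*x0 - a*x1*x1 - b*x2*x2 + a*b*x3*x3"

fun trd :: "'a::field quat \<Rightarrow> 'a" where
  "trd (x0,x1,x2,x3) = 2*x0"

fun lincomb :: "(nat \<Rightarrow> 'a::field) \<Rightarrow> 'a quat list \<Rightarrow> 'a quat" where
  "lincomb c [] = qzero"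
| "lincomb c (g # G) = qadd (qsmul (c 0) g) (lincomb (\<lambda>i. c (Suc i)) G)"

definition is_lattice :: "('a::field \<Rightarrow> int) \<Rightarrow> 'a quat set \<Rightarrow> bool" where
  "is_lattice v L \<longleftrightarrow>
     (\<exists>G. L = {lincomb c G | c. \<forall>i. c i \<in> OF v} \<and>
          {lincomb c G | c. True} = UNIV)"

definition is_order :: "('a::field \<Rightarrow> int) \<Rightarrow> 'a \<Rightarrow> 'a \<Rightarrow> 'a quat set \<Rightarrow> bool" where
  "is_order v a b R \<longleftrightarrow> is_lattice v R \<and> qone \<in> R \<and>
     (\<forall>x\<in>R. \<forall>y\<in>R. qmul a b x y \<in> R)"

definition trace_dual :: "('a::field \<Rightarrow> int) \<Rightarrow> 'a \<Rightarrow> 'a \<Rightarrow> 'a quat set \<Rightarrow> 'a quat set" where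
  "trace_dual v a b R = {x. \<forall>y\<in>R. trd (qmul a b x y) \<in> OF v}"

text \<open>A left R-submodule M of A is projective: it is a direct summand of a free left
R-module R^n, i.e. there are left R-linear maps f : R^n -> M and g : M -> R^n with
f o g = id on M.  Elements of R^n are maps nat => A supported in {..<n} with values in R.\<close>
definition free_mod :: "'a::field quat set \<Rightarrow> nat \<Rightarrow> (nat \<Rightarrow> 'a quat) set" where
  "free_mod R n = {x. (\<forall>i<n. x i \<in> R) \<and> (\<forall>i\<ge>n. x i = qzero)}"

definition left_projective ::
  "'a::field \<Rightarrow> 'a \<Rightarrow> 'a quat set \<Rightarrow> 'a quat set \<Rightarrow> bool" where
  "left_projective a b R M \<longleftrightarrow>
     (\<exists>n (f :: (nat \<Rightarrow> 'a quat) \<Rightarrow> 'a quat) (g :: 'a quat \<Rightarrow> nat \<Rightarrow> 'a quat).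
        (\<forall>x\<in>free_mod R n. f x \<in> M) \<and>
        (\<forall>x\<in>free_mod R n. \<forall>y\<in>free_mod R n. f (\<lambda>i. qadd (x i) (y i)) = qadd (f x) (f y)) \<and>
        (\<forall>r\<in>R. \<forall>x\<in>free_mod R n. f (\<lambda>i. qmul a b r (x i)) = qmul a b r (f x)) \<and>
        (\<forall>m\<in>M. g m \<in> free_mod R n) \<and>
        (\<forall>m\<in>M. \<forall>m'\<in>M. g (qadd m m') = (\<lambda>i. qadd (g m i) (g m' i))) \<and>
        (\<forall>r\<in>R. \<forall>m\<in>M. g (qmul a b r m) = (\<lambda>i. qmul a b r (g m i))) \<and>
        (\<forall>m\<in>M. f (g m) = m))"

definition gorenstein :: "('a::field \<Rightarrow> int) \<Rightarrow> 'a \<Rightarrow> 'a \<Rightarrow> 'a quat set \<Rightarrow> bool" where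
  "gorenstein v a b R \<longleftrightarrow> left_projective a b R (trace_dual v a b R)"

definition bass :: "('a::field \<Rightarrow> int) \<Rightarrow> 'a \<Rightarrow> 'a \<Rightarrow> 'a quat set \<Rightarrow> bool" where
  "bass v a b R \<longleftrightarrow> is_order v a b R \<and>
     (\<forall>R'. is_order v a b R' \<and> R \<subseteq> R' \<longrightarrow> gorenstein v a b R')"

definition left_ideal :: "'a::field \<Rightarrow> 'a \<Rightarrow> 'a quat set \<Rightarrow> 'a quat set \<Rightarrow> bool" where
  "left_ideal a b R I \<longleftrightarrow> I \<subseteq> R \<and> qzero \<in> I \<and>
     (\<forall>x\<in>I. \<forall>y\<in>I. qadd x y \<in> I) \<and> (\<forall>x\<in>I. qneg x \<in> I) \<and>
     (\<forall>r\<in>R. \<forall>x\<in>I. qmul a b r x \<in> I)"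

definition maximal_left_ideal :: "'a::field \<Rightarrow> 'a \<Rightarrow> 'a quat set \<Rightarrow> 'a quat set \<Rightarrow> bool" where
  "maximal_left_ideal a b R I \<longleftrightarrow> left_ideal a b R I \<and> I \<noteq> R \<and>
     (\<forall>I'. left_ideal a b R I' \<and> I \<subseteq> I' \<longrightarrow> I' = I \<or> I' = R)"

definition jacobson :: "'a::field \<Rightarrow> 'a \<Rightarrow> 'a quat set \<Rightarrow> 'a quat set" where
  "jacobson a b R = {x\<in>R. \<forall>I. maximal_left_ideal a b R I \<longrightarrow> x \<in> I}"

text \<open>Eichler invariant 0: R/J(R) is isomorphic (as a ring) to the residue field
k = O_F/p_F.  Expressed by a map psi : R -> O_F inducing a ring isomorphism
R/J(R) -> O_F/p_F: additive and multiplicative modulo p_F, unital modulo p_F,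
surjective modulo p_F, with psi(x) in p_F exactly for x in J(R).\<close>
definition eichler_zero :: "('a::field \<Rightarrow> int) \<Rightarrow> 'a \<Rightarrow> 'a \<Rightarrow> 'a quat set \<Rightarrow> bool" where
  "eichler_zero v a b R \<longleftrightarrow>
     (\<exists>psi. (\<forall>x\<in>R. psi x \<in> OF v) \<and>
        (\<forall>x\<in>R. \<forall>y\<in>R. psi (qadd x y) - (psi x + psi y) \<in> PF v) \<and>
        (\<forall>x\<in>R. \<forall>y\<in>R. psi (qmul a b x y) - psi x * psi y \<in> PF v) \<and>
        psi qone - 1 \<in> PF v \<and>
        (\<forall>c\<in>OF v. \<exists>x\<in>R. psi x - c \<in> PF v) \<and>
        (\<forall>x\<in>R. psi x \<in> PF v \<longleftrightarrow> x \<in> jacobson a b R))"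

definition qunits :: "'a::field \<Rightarrow> 'a \<Rightarrow> 'a quat set \<Rightarrow> 'a quat set" where
  "qunits a b R = {x\<in>R. \<exists>y\<in>R. qmul a b x y = qone \<and> qmul a b y x = qone}"

end

theory Submission
  imports Defs
begin

definition qconj :: "'a::field quat \<Rightarrow> 'a quat" where
  "qconj x = (case x of (x0,x1,x2,x3) \<Rightarrow> (x0,-x1,-x2,-x3))"
definition sc :: "'a::field \<Rightarrow> 'a quat" where "sc c = (c,0,0,0)"

lemma nrd_mult: "nrd a b (qmul a b x y) = nrd a b x * nrd a b y"
  by (cases x; cases y) (simp add: algebra_simps)
lemma trd_CH: "trd (qmul a b x (qmul a b x y)) = trd x * trd (qmul a b x y) - nrd a b x * trd y"
  by (cases x; cases y) (simp add: algebra_simps)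
lemma conj_eq: "qconj x = qadd (qsmul (trd x) qone) (qneg x)"
  by (cases x) (simp add: qconj_def qone_def)
lemma mul_conj: "qmul a b x (qconj x) = sc (nrd a b x)"
  by (cases x) (simp add: qconj_def sc_def algebra_simps)
lemma conj_mul: "qconj (qmul a b x y) = qmul a b (qconj y) (qconj x)"
  by (cases x; cases y) (simp add: qconj_def algebra_simps)
lemma conj_add: "qconj (qadd x y) = qadd (qconj x) (qconj y)"
  by (cases x; cases y) (simp add: qconj_def)
lemma conj_neg: "qconj (qneg x) = qneg (qconj x)"
  by (cases x) (simp add: qconj_def)
lemma conj_one: "qconj qone = qone" by (simp add: qconj_def qone_def)
lemma conj_zero: "qconj qzero = qzero" by (simp add: qconj_def qzero_def)
lemma conj_conj: "qconj (qconj x) = x" by (cases x) (simp add: qconj_def)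
lemma conj_sc: "qconj (sc c) = sc c" by (simp add: qconj_def sc_def)
lemma sc_mul: "qmul a b (sc c) (sc d) = sc (c*d)" by (simp add: sc_def)
lemma mul_one: "qmul a b s qone = s" by (cases s) (simp add: qone_def)
lemma sc_one: "sc 1 = qone" by (simp add: sc_def qone_def)
lemma sc_eq: "sc c = qsmul c qone" by (simp add: sc_def qone_def)
lemma one_trick: "qadd (qmul a b r y) (qneg (qadd (qmul a b r y) (qneg qone))) = qone"
  by (cases "qmul a b r y") (simp add: qone_def)
lemma neg_eq: "qneg x = qsmul (-1) x" by (cases x) simp
lemma add_neg: "qadd x (qneg x) = qzero" by (cases x) (simp add: qzero_def)
lemma zero_add: "qadd qzero qzero = qzero" by (simp add: qzero_def)
lemma add_sub: "qadd (qadd x (qneg y)) y = x" by (cases x; cases y) simp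
lemma trd_one: "trd qone = 2" by (simp add: qone_def)
lemma nrd_one: "nrd a b qone = 1" by (simp add: qone_def)
lemma nrd_sc: "nrd a b (sc c) = c * c" by (simp add: sc_def)

definition vge :: "('a::field \<Rightarrow> int) \<Rightarrow> int \<Rightarrow> 'a \<Rightarrow> bool" where
  "vge v B x \<longleftrightarrow> x = 0 \<or> v x \<ge> B"

locale dval =
  fixes v :: "'a::field \<Rightarrow> int"
  assumes dv: "discrete_valuation v"
begin

lemma vmul: "x \<noteq> 0 \<Longrightarrow> y \<noteq> 0 \<Longrightarrow> v (x*y) = v x + v y"
  using dv unfolding discrete_valuation_def by blast
lemma vadd: "x \<noteq> 0 \<Longrightarrow> y \<noteq> 0 \<Longrightarrow> x + y \<noteq> 0 \<Longrightarrow> v (x+y) \<ge> min (v x) (v y)"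
  using dv unfolding discrete_valuation_def by blast
lemma v1: "v 1 = 0" using vmul[of 1 1] by simp
lemma vm1: "v (-1) = 0"
proof -
  have "v ((-1)*(-1)) = v (-1) + v (-1)" by (rule vmul) auto
  then show ?thesis using v1 by simp
qed
lemma vneg: "v (-x) = v x"
proof (cases "x = 0")
  case False
  have "v ((-1)*x) = v (-1) + v x" by (rule vmul) (use False in auto)
  then show ?thesis using vm1 by simp
qed simp
lemma vinv: "x \<noteq> 0 \<Longrightarrow> v (inverse x) = - v x"
  using vmul[of x "inverse x"] v1 by simp
lemma vpow: "x \<noteq> 0 \<Longrightarrow> v (x^m) = int m * v x"
  by (induction m) (auto simp: v1 vmul algebra_simps)

lemma vge_add: "vge v B x \<Longrightarrow> vge v B y \<Longrightarrow> vge v B (x+y)"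
proof -
  assume hx: "vge v B x" and hy: "vge v B y"
  show ?thesis
  proof (cases "x = 0 \<or> y = 0 \<or> x + y = 0")
    case True then show ?thesis using hx hy unfolding vge_def by auto
  next
    case False
    then have "v (x+y) \<ge> min (v x) (v y)" using vadd by blast
    then show ?thesis using hx hy False unfolding vge_def by auto
  qed
qed
lemma vge_neg: "vge v B x \<Longrightarrow> vge v B (-x)"
  unfolding vge_def by (auto simp: vneg)
lemma vge_sub: "vge v B x \<Longrightarrow> vge v B y \<Longrightarrow> vge v B (x-y)"
  using vge_add[of B x "-y"] vge_neg[of B y] by simp
lemma vge_mul: "vge v B x \<Longrightarrow> vge v C y \<Longrightarrow> vge v (B+C) (x*y)"
  unfolding vge_def by (cases "x = 0 \<or> y = 0") (auto simp: vmul)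
lemma vge_mono: "vge v B x \<Longrightarrow> C \<le> B \<Longrightarrow> vge v C x"
  unfolding vge_def by auto
lemma vge_self: "vge v (v x) x" unfolding vge_def by auto
lemma vge_zero[simp]: "vge v B 0" unfolding vge_def by auto

lemma OF_vge: "x \<in> OF v \<longleftrightarrow> vge v 0 x" unfolding OF_def vge_def by auto
lemma PF_vge: "x \<in> PF v \<longleftrightarrow> vge v 1 x" unfolding PF_def vge_def by auto

lemma OF_add: "x \<in> OF v \<Longrightarrow> y \<in> OF v \<Longrightarrow> x + y \<in> OF v" by (simp add: OF_vge vge_add)
lemma OF_neg: "x \<in> OF v \<Longrightarrow> -x \<in> OF v" by (simp add: OF_vge vge_neg)
lemma OF_sub: "x \<in> OF v \<Longrightarrow> y \<in> OF v \<Longrightarrow> x - y \<in> OF v" by (simp add: OF_vge vge_sub)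
lemma OF_mul: "x \<in> OF v \<Longrightarrow> y \<in> OF v \<Longrightarrow> x * y \<in> OF v" using vge_mul[of 0 x 0 y] by (simp add: OF_vge)
lemma OF_0: "0 \<in> OF v" by (simp add: OF_vge)
lemma OF_1: "1 \<in> OF v" by (simp add: OF_def v1)
lemma OF_m1: "-1 \<in> OF v" by (simp add: OF_def vm1)
lemma PF_add: "x \<in> PF v \<Longrightarrow> y \<in> PF v \<Longrightarrow> x + y \<in> PF v" by (simp add: PF_vge vge_add)
lemma PF_neg: "x \<in> PF v \<Longrightarrow> -x \<in> PF v" by (simp add: PF_vge vge_neg)
lemma PF_sub: "x \<in> PF v \<Longrightarrow> y \<in> PF v \<Longrightarrow> x - y \<in> PF v" by (simp add: PF_vge vge_sub)
lemma PF_mul: "x \<in> PF v \<Longrightarrow> y \<in> OF v \<Longrightarrow> x * y \<in> PF v" using vge_mul[of 1 x 0 y] by (simp add: OF_vge PF_vge)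
lemma PF_mul2: "x \<in> OF v \<Longrightarrow> y \<in> PF v \<Longrightarrow> x * y \<in> PF v" using PF_mul[of y x] by (simp add: mult.commute)
lemma PF_OF: "x \<in> PF v \<Longrightarrow> x \<in> OF v" unfolding PF_def OF_def by auto
lemma PF_0: "0 \<in> PF v" by (simp add: PF_def)
lemma one_notin_PF: "1 \<notin> PF v" by (simp add: PF_def v1)
lemma unit_of: "x \<in> OF v \<Longrightarrow> x \<notin> PF v \<Longrightarrow> x \<noteq> 0 \<and> v x = 0"
  unfolding OF_def PF_def by auto
lemma inv_OF: "x \<in> OF v \<Longrightarrow> x \<notin> PF v \<Longrightarrow> inverse x \<in> OF v"
proof -
  assume "x \<in> OF v" "x \<notin> PF v"
  then have "x \<noteq> 0" "v x = 0" using unit_of by auto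
  then have "v (inverse x) = 0" using vinv by simp
  then show ?thesis unfolding OF_def by simp
qed
lemma PF_prime: "x \<in> OF v \<Longrightarrow> y \<in> OF v \<Longrightarrow> x * y \<in> PF v \<Longrightarrow> x \<notin> PF v \<Longrightarrow> y \<in> PF v"
proof -
  assume x: "x \<in> OF v" "x \<notin> PF v" and xy: "x * y \<in> PF v"
  have u: "x \<noteq> 0" "v x = 0" using unit_of[OF x] by auto
  show "y \<in> PF v"
  proof (cases "y = 0")
    case True then show ?thesis by (simp add: PF_def)
  next
    case False
    then have "x * y \<noteq> 0" "v (x*y) = v y" using u vmul by auto
    then show ?thesis using xy unfolding PF_def by auto
  qed
qed

lemma strict_ultra: "x \<noteq> 0 \<Longrightarrow> (y = 0 \<or> v y > v x) \<Longrightarrow> x + y \<noteq> 0 \<and> v (x+y) = v x"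
proof (cases "y = 0")
  case False
  assume x: "x \<noteq> 0" and h: "y = 0 \<or> v y > v x"
  with False have lt: "v y > v x" by auto
  have ne: "x + y \<noteq> 0"
  proof
    assume "x + y = 0" then have "y = -x" using minus_unique[of x y] by simp
    then show False using lt vneg by simp
  qed
  have 1: "v (x+y) \<ge> min (v x) (v y)" using vadd x False ne by blast
  have "v ((x+y) + (-y)) \<ge> min (v (x+y)) (v (-y))" by (rule vadd) (use ne False x in auto)
  then have 2: "v x \<ge> min (v (x+y)) (v y)" by (simp add: vneg)
  from 1 2 lt ne show ?thesis by (simp add: min_def split: if_splits)
qed simp

end

lemma lincomb_add: "qadd (lincomb c G) (lincomb d G) = lincomb (\<lambda>i. c i + d i) G"
proof (induction G arbitrary: c d)
  case Nil then show ?case by (simp add: qzero_def)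
next
  case (Cons g G)
  have "lincomb (\<lambda>i. c i + d i) (g#G) = qadd (qsmul (c 0 + d 0) g) (qadd (lincomb (\<lambda>i. c (Suc i)) G) (lincomb (\<lambda>i. d (Suc i)) G))"
    by (simp add: Cons.IH)
  then show ?case
    by (cases g; cases "lincomb (\<lambda>i. c (Suc i)) G"; cases "lincomb (\<lambda>i. d (Suc i)) G")
       (simp add: algebra_simps)
qed

lemma lincomb_smul: "qsmul r (lincomb c G) = lincomb (\<lambda>i. r * c i) G"
proof (induction G arbitrary: c)
  case Nil then show ?case by (simp add: qzero_def)
next
  case (Cons g G)
  have "lincomb (\<lambda>i. r * c i) (g#G) = qadd (qsmul (r * c 0) g) (qsmul r (lincomb (\<lambda>i. c (Suc i)) G))"
    by (simp add: Cons.IH)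
  then show ?case
    by (cases g; cases "lincomb (\<lambda>i. c (Suc i)) G") (simp add: algebra_simps)
qed

fun qvge :: "('a::field \<Rightarrow> int) \<Rightarrow> int \<Rightarrow> 'a quat \<Rightarrow> bool" where
  "qvge v B (x0,x1,x2,x3) \<longleftrightarrow> vge v B x0 \<and> vge v B x1 \<and> vge v B x2 \<and> vge v B x3"

locale ordctx = dval v for v :: "'a::field \<Rightarrow> int" +
  fixes a b :: 'a and R :: "'a quat set"
  assumes ord: "is_order v a b R"
begin

lemma R_mul: "x \<in> R \<Longrightarrow> y \<in> R \<Longrightarrow> qmul a b x y \<in> R"
  using ord unfolding is_order_def by blast
lemma R_one: "qone \<in> R"
  using ord unfolding is_order_def by blast

lemma R_form: obtains G where "R = {lincomb c G | c. \<forall>i. c i \<in> OF v}"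
  using ord unfolding is_order_def is_lattice_def by blast

lemma R_add: "x \<in> R \<Longrightarrow> y \<in> R \<Longrightarrow> qadd x y \<in> R"
proof -
  assume x: "x \<in> R" and y: "y \<in> R"
  obtain G where G: "R = {lincomb c G | c. \<forall>i. c i \<in> OF v}" by (rule R_form)
  from x G obtain c where c: "x = lincomb c G" "\<forall>i. c i \<in> OF v" by auto
  from y G obtain d where d: "y = lincomb d G" "\<forall>i. d i \<in> OF v" by auto
  have "qadd x y = lincomb (\<lambda>i. c i + d i) G" using c d lincomb_add by simp
  moreover have "\<forall>i. c i + d i \<in> OF v" using c d OF_add by auto
  ultimately show ?thesis using G by auto
qed

lemma R_smul: "r \<in> OF v \<Longrightarrow> x \<in> R \<Longrightarrow> qsmul r x \<in> R"
proof -
  assume r: "r \<in> OF v" and x: "x \<in> R"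
  obtain G where G: "R = {lincomb c G | c. \<forall>i. c i \<in> OF v}" by (rule R_form)
  from x G obtain c where c: "x = lincomb c G" "\<forall>i. c i \<in> OF v" by auto
  have "qsmul r x = lincomb (\<lambda>i. r * c i) G" using c lincomb_smul by simp
  moreover have "\<forall>i. r * c i \<in> OF v" using c r OF_mul by auto
  ultimately show ?thesis using G by auto
qed

lemma R_neg: "x \<in> R \<Longrightarrow> qneg x \<in> R"
  unfolding neg_eq by (rule R_smul[OF OF_m1])

lemma R_sc: "c \<in> OF v \<Longrightarrow> sc c \<in> R"
  unfolding sc_eq by (rule R_smul[OF _ R_one])

lemma R_zero: "qzero \<in> R"
  using R_add[OF R_one R_neg[OF R_one]] by (simp only: add_neg)

lemma qvge_lincomb: "\<forall>g\<in>set G. qvge v B g \<Longrightarrow> \<forall>i. c i \<in> OF v \<Longrightarrow> qvge v B (lincomb c G)"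
proof (induction G arbitrary: c)
  case Nil then show ?case by (simp add: qzero_def)
next
  case (Cons g G)
  have IH: "qvge v B (lincomb (\<lambda>i. c (Suc i)) G)" using Cons by auto
  have g: "qvge v B g" using Cons by auto
  have c0: "vge v 0 (c 0)" using Cons OF_vge by auto
  have m: "vge v B y \<Longrightarrow> vge v B (c 0 * y)" for y using vge_mul[OF c0, of B y] by simp
  show ?case using IH g
    by (cases g; cases "lincomb (\<lambda>i. c (Suc i)) G") (auto intro!: vge_add m)
qed

lemma qvge_ex: "\<exists>B. \<forall>g\<in>set G. qvge v B g"
proof (induction G)
  case Nil then show ?case by simp
next
  case (Cons g G)
  then obtain B where B: "\<forall>g\<in>set G. qvge v B g" by auto
  obtain x0 x1 x2 x3 where g: "g = (x0,x1,x2,x3)" by (cases g)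
  define C where "C = min B (min (v x0) (min (v x1) (min (v x2) (v x3))))"
  have "qvge v B y \<Longrightarrow> qvge v C y" for y
    by (cases y) (auto simp: C_def intro: vge_mono)
  moreover have "qvge v C g" using g by (auto simp: C_def intro: vge_mono[OF vge_self])
  ultimately show ?case using B by (intro exI[of _ C]) auto
qed

lemma R_bound: "\<exists>B. \<forall>y\<in>R. qvge v B y"
proof -
  obtain G where G: "R = {lincomb c G | c. \<forall>i. c i \<in> OF v}" by (rule R_form)
  obtain B where "\<forall>g\<in>set G. qvge v B g" using qvge_ex by blast
  then show ?thesis using qvge_lincomb G by blast
qed

end

fun qpow :: "'a::field \<Rightarrow> 'a \<Rightarrow> 'a quat \<Rightarrow> nat \<Rightarrow> 'a quat" where
  "qpow a b x 0 = qone"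
| "qpow a b x (Suc m) = qmul a b x (qpow a b x m)"

context ordctx
begin

lemma R_pow: "x \<in> R \<Longrightarrow> qpow a b x m \<in> R"
  by (induction m) (auto simp: R_one R_mul)

lemma nrd_pow: "nrd a b (qpow a b x m) = nrd a b x ^ m"
  by (induction m) (auto simp: nrd_one nrd_mult)

lemma nrd_bound: "\<exists>C. \<forall>y\<in>R. vge v C (nrd a b y)"
proof -
  obtain B where B: "\<forall>y\<in>R. qvge v B y" using R_bound by blast
  define m where "m = min 0 (min (v a) (min (v b) (v (a*b))))"
  define C where "C = m + B + B"
  have "vge v C (nrd a b y)" if y: "y \<in> R" for y
  proof -
    obtain x0 x1 x2 x3 where yy: "y = (x0,x1,x2,x3)" by (cases y)
    have h: "vge v B x0" "vge v B x1" "vge v B x2" "vge v B x3" using B y yy by auto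
    have t0: "vge v C (x0*x0)"
      using vge_mul[OF h(1) h(1)] by (rule vge_mono) (simp add: C_def m_def)
    have t1: "vge v C (a*x1*x1)"
      using vge_mul[OF vge_mul[OF vge_self h(2)] h(2)] by (rule vge_mono) (simp add: C_def m_def)
    have t2: "vge v C (b*x2*x2)"
      using vge_mul[OF vge_mul[OF vge_self h(3)] h(3)] by (rule vge_mono) (simp add: C_def m_def)
    have t3: "vge v C (a*b*x3*x3)"
      using vge_mul[OF vge_mul[OF vge_self h(4)] h(4), of "a*b"] by (rule vge_mono) (simp add: C_def m_def)
    show ?thesis using yy t0 t1 t2 t3 by (simp add: vge_add vge_sub)
  qed
  then show ?thesis by blast
qed

lemma trd_bound: "\<exists>C. \<forall>y\<in>R. vge v C (trd y)"
proof -
  obtain B where B: "\<forall>y\<in>R. qvge v B y" using R_bound by blast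
  have "vge v (v 2 + B) (trd y)" if y: "y \<in> R" for y
  proof -
    obtain x0 x1 x2 x3 where yy: "y = (x0,x1,x2,x3)" by (cases y)
    have h: "vge v B x0" using B y yy by auto
    show ?thesis using yy vge_mul[OF vge_self h] by simp
  qed
  then show ?thesis by blast
qed

lemma unbounded:
  assumes "\<forall>m. vge v C (f m)" "\<forall>m. f m \<noteq> 0 \<and> v (f m) = int m * d" "d < 0"
  shows False
proof -
  define m where "m = nat (- C) + 1"
  have "v (f m) \<ge> C" using assms(1,2) unfolding vge_def by blast
  moreover have "d * int m \<le> (-1) * int m" using assms(3) by (intro mult_right_mono) auto
  then have "int m * d \<le> - int m" by (simp add: mult.commute)
  ultimately show False using assms(2) by (simp add: m_def split: if_splits)
qed

lemma nrd_OF: "x \<in> R \<Longrightarrow> nrd a b x \<in> OF v"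
proof (rule ccontr)
  assume x: "x \<in> R" and n: "nrd a b x \<notin> OF v"
  let ?n = "nrd a b x"
  have nz: "?n \<noteq> 0" and neg: "v ?n < 0" using n unfolding OF_def by auto
  obtain C where C: "\<forall>y\<in>R. vge v C (nrd a b y)" using nrd_bound by blast
  show False
  proof (rule unbounded[of C "\<lambda>m. ?n ^ m" "v ?n"])
    show "\<forall>m. vge v C (?n ^ m)" using C R_pow[OF x] nrd_pow by metis
    show "\<forall>m. ?n ^ m \<noteq> 0 \<and> v (?n ^ m) = int m * v ?n" using nz vpow by simp
  qed (rule neg)
qed

lemma trd_OF:
  assumes two: "(2::'a) \<in> OF_units v" and x: "x \<in> R"
  shows "trd x \<in> OF v"
proof (rule ccontr)
  assume t: "trd x \<notin> OF v"
  let ?t = "trd x" and ?n = "nrd a b x"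
  have tz: "?t \<noteq> 0" and neg: "v ?t < 0" using t unfolding OF_def by auto
  have n: "?n = 0 \<or> v ?n \<ge> 0" using nrd_OF[OF x] unfolding OF_def by auto
  have t2: "(2::'a) \<noteq> 0" "v 2 = 0" using two unfolding OF_units_def by auto
  obtain C where C: "\<forall>y\<in>R. vge v C (trd y)" using trd_bound by blast
  define s where "s m = trd (qpow a b x m)" for m
  have rec: "s (Suc (Suc m)) = ?t * s (Suc m) + (- (?n * s m))" for m
    unfolding s_def by (simp add: trd_CH)
  have P: "(s m \<noteq> 0 \<and> v (s m) = int m * v ?t) \<and> (s (Suc m) \<noteq> 0 \<and> v (s (Suc m)) = int (Suc m) * v ?t)" for m
  proof (induction m)
    case 0
    show ?case using t2 tz by (simp add: s_def trd_one mul_one)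
  next
    case (Suc m)
    have a1: "?t * s (Suc m) \<noteq> 0" using Suc tz by simp
    have a2: "v (?t * s (Suc m)) = int (Suc (Suc m)) * v ?t" using Suc tz vmul by (simp add: algebra_simps)
    have "- (?n * s m) = 0 \<or> v (- (?n * s m)) > v (?t * s (Suc m))"
    proof (cases "?n = 0")
      case False
      then have "v (- (?n * s m)) = v ?n + int m * v ?t" using Suc vmul vneg by simp
      then show ?thesis using a2 n False neg by (simp add: algebra_simps)
    qed simp
    from strict_ultra[OF a1 this] a2 rec[of m] Suc show ?case by simp
  qed
  show False
  proof (rule unbounded[of C s "v ?t"])
    show "\<forall>m. vge v C (s m)" using C R_pow[OF x] unfolding s_def by blast
    show "\<forall>m. s m \<noteq> 0 \<and> v (s m) = int m * v ?t" using P by blast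
  qed (rule neg)
qed

lemma R_conj: "(2::'a) \<in> OF_units v \<Longrightarrow> x \<in> R \<Longrightarrow> qconj x \<in> R"
  unfolding conj_eq by (intro R_add R_smul R_one R_neg trd_OF)

end

definition cls :: "('a::field \<Rightarrow> int) \<Rightarrow> 'a \<Rightarrow> 'a set" where
  "cls v z = {w \<in> OF v. z - w \<in> PF v}"

lemma sc_sub: "sc (c - d) = qadd (sc c) (qneg (sc d))" by (simp add: sc_def)

locale psictx = ordctx v a b R for v :: "'a::field \<Rightarrow> int" and a b R +
  fixes psi :: "'a quat \<Rightarrow> 'a"
  assumes two: "(2::'a) \<in> OF_units v"
    and fin: "finite_residue_field v"
    and ps_OF: "\<And>x. x \<in> R \<Longrightarrow> psi x \<in> OF v"
    and ps_add: "\<And>x y. x \<in> R \<Longrightarrow> y \<in> R \<Longrightarrow> psi (qadd x y) - (psi x + psi y) \<in> PF v"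
    and ps_mul: "\<And>x y. x \<in> R \<Longrightarrow> y \<in> R \<Longrightarrow> psi (qmul a b x y) - psi x * psi y \<in> PF v"
    and ps_one: "psi qone - 1 \<in> PF v"
    and ps_surj: "\<And>c. c \<in> OF v \<Longrightarrow> \<exists>x\<in>R. psi x - c \<in> PF v"
    and ps_jac: "\<And>x. x \<in> R \<Longrightarrow> psi x \<in> PF v \<longleftrightarrow> x \<in> jacobson a b R"
begin

lemma Rc: "x \<in> R \<Longrightarrow> qconj x \<in> R" using R_conj[OF two] .

lemma ps_zero: "psi qzero \<in> PF v"
proof -
  have "psi (qadd qzero qzero) - (psi qzero + psi qzero) \<in> PF v" using ps_add R_zero by blast
  then have "- psi qzero \<in> PF v" by (simp add: zero_add)
  then show ?thesis using PF_neg by fastforce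
qed

lemma ps_neg: "x \<in> R \<Longrightarrow> psi (qneg x) + psi x \<in> PF v"
proof -
  assume x: "x \<in> R"
  have "psi (qadd x (qneg x)) - (psi x + psi (qneg x)) \<in> PF v" using ps_add x R_neg by blast
  then have "psi qzero - (psi x + psi (qneg x)) \<in> PF v" by (simp add: add_neg)
  from PF_sub[OF ps_zero this] show ?thesis by (simp add: add.commute)
qed

lemma ps_sub: "x \<in> R \<Longrightarrow> y \<in> R \<Longrightarrow> psi (qadd x (qneg y)) - (psi x - psi y) \<in> PF v"
proof -
  assume x: "x \<in> R" and y: "y \<in> R"
  have 1: "psi (qadd x (qneg y)) - (psi x + psi (qneg y)) \<in> PF v" using ps_add x y R_neg by blast
  have 2: "psi (qneg y) + psi y \<in> PF v" using ps_neg y .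
  have "psi (qadd x (qneg y)) - (psi x - psi y) = (psi (qadd x (qneg y)) - (psi x + psi (qneg y))) + (psi (qneg y) + psi y)"
    by (simp add: algebra_simps)
  then show ?thesis using PF_add[OF 1 2] by metis
qed

lemma ps_one_notin: "psi qone \<notin> PF v"
proof
  assume "psi qone \<in> PF v"
  from PF_sub[OF this ps_one] show False using one_notin_PF by simp
qed

lemma ker_sc: assumes d: "d \<in> OF v" and p: "psi (sc d) \<in> PF v" shows "d \<in> PF v"
proof (rule ccontr)
  assume nd: "d \<notin> PF v"
  have u: "d \<noteq> 0" using unit_of[OF d nd] by simp
  have di: "inverse d \<in> OF v" using inv_OF[OF d nd] .
  have "qmul a b (sc d) (sc (inverse d)) = qone" using u by (simp add: sc_mul sc_one)
  then have 1: "psi qone - psi (sc d) * psi (sc (inverse d)) \<in> PF v"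
    using ps_mul[OF R_sc[OF d] R_sc[OF di]] by simp
  have 2: "psi (sc d) * psi (sc (inverse d)) \<in> PF v" using PF_mul[OF p ps_OF[OF R_sc[OF di]]] .
  have "psi qone \<in> PF v" using PF_add[OF 1 2] by simp
  then show False using ps_one_notin by simp
qed

lemma cls_eq: "z \<in> OF v \<Longrightarrow> w \<in> OF v \<Longrightarrow> z - w \<in> PF v \<Longrightarrow> cls v z = cls v w"
proof -
  assume zw: "z - w \<in> PF v"
  have "z - u \<in> PF v \<longleftrightarrow> w - u \<in> PF v" for u
  proof
    assume "z - u \<in> PF v" from PF_sub[OF this zw] show "w - u \<in> PF v" by simp
  next
    assume "w - u \<in> PF v" from PF_add[OF this zw] show "z - u \<in> PF v" by simp
  qed
  then show ?thesis unfolding cls_def by blast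
qed

lemma cls_self: "z \<in> OF v \<Longrightarrow> z \<in> cls v z" unfolding cls_def using PF_0 by simp

lemma h_surj: assumes y: "y \<in> OF v" shows "\<exists>c\<in>OF v. psi (sc c) - y \<in> PF v"
proof -
  obtain S where S: "finite S" "S \<subseteq> OF v" "\<forall>x\<in>OF v. \<exists>s\<in>S. x - s \<in> PF v"
    using fin unfolding finite_residue_field_def by blast
  define Q where "Q = cls v ` OF v"
  have "Q \<subseteq> cls v ` S"
  proof
    fix q assume "q \<in> Q"
    then obtain z where z: "z \<in> OF v" "q = cls v z" unfolding Q_def by blast
    then obtain s where "s \<in> S" "z - s \<in> PF v" using S by blast
    then have "q = cls v s" using cls_eq[OF z(1) _ \<open>z - s \<in> PF v\<close>] S(2) z(2) by blast
    then show "q \<in> cls v ` S" using \<open>s \<in> S\<close> by blast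
  qed
  then have fQ: "finite Q" using finite_subset finite_imageI[OF S(1)] by blast
  define rep where "rep q = (SOME c. c \<in> OF v \<and> q = cls v c)" for q
  have rep: "rep q \<in> OF v \<and> q = cls v (rep q)" if "q \<in> Q" for q
  proof -
    have "\<exists>c. c \<in> OF v \<and> q = cls v c" using that unfolding Q_def by blast
    then show ?thesis unfolding rep_def by (rule someI_ex)
  qed
  define g where "g q = cls v (psi (sc (rep q)))" for q
  have sub: "g ` Q \<subseteq> Q"
  proof
    fix y assume "y \<in> g ` Q"
    then obtain q where q: "q \<in> Q" "y = g q" by blast
    have "psi (sc (rep q)) \<in> OF v" using ps_OF[OF R_sc[OF conjunct1[OF rep[OF q(1)]]]] .
    then show "y \<in> Q" unfolding q(2) g_def Q_def by blast
  qed
  have inj: "inj_on g Q"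
  proof (rule inj_onI)
    fix q1 q2 assume q1: "q1 \<in> Q" and q2: "q2 \<in> Q" and e: "g q1 = g q2"
    let ?c1 = "rep q1" and ?c2 = "rep q2"
    have c1: "?c1 \<in> OF v" and c2: "?c2 \<in> OF v" using conjunct1[OF rep[OF q1]] conjunct1[OF rep[OF q2]] by auto
    have p1: "psi (sc ?c1) \<in> OF v" and p2: "psi (sc ?c2) \<in> OF v" using ps_OF[OF R_sc[OF c1]] ps_OF[OF R_sc[OF c2]] by auto
    have "psi (sc ?c1) \<in> cls v (psi (sc ?c2))" using e cls_self[OF p1] unfolding g_def by simp
    then have d: "psi (sc ?c2) - psi (sc ?c1) \<in> PF v" unfolding cls_def by simp
    have "psi (sc (?c2 - ?c1)) - (psi (sc ?c2) - psi (sc ?c1)) \<in> PF v"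
      unfolding sc_sub by (rule ps_sub[OF R_sc[OF c2] R_sc[OF c1]])
    from PF_add[OF this d] have "psi (sc (?c2 - ?c1)) \<in> PF v" by simp
    then have "?c2 - ?c1 \<in> PF v" by (rule ker_sc[OF OF_sub[OF c2 c1]])
    then have E: "cls v ?c2 = cls v ?c1" using cls_eq[OF c2 c1] by blast
    have X1: "q1 = cls v ?c1" by (fact conjunct2[OF rep[OF q1]])
    have X2: "q2 = cls v ?c2" by (fact conjunct2[OF rep[OF q2]])
    show "q1 = q2" using trans[OF trans[OF X1 sym[OF E]] sym[OF X2]] .
  qed
  have gQ: "g ` Q = Q" using endo_inj_surj[OF fQ sub inj] .
  have yQ: "cls v y \<in> Q" using y unfolding Q_def by (rule imageI)
  then have "cls v y \<in> g ` Q" by (simp only: gQ)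
  then obtain q where q: "q \<in> Q" "cls v y = g q" by (rule imageE)
  have c: "rep q \<in> OF v" using conjunct1[OF rep[OF q(1)]] .
  have e: "cls v (psi (sc (rep q))) = cls v y" using q(2) unfolding g_def by (rule sym)
  have "y \<in> cls v (psi (sc (rep q)))" unfolding e by (rule cls_self[OF y])
  then have "psi (sc (rep q)) - y \<in> PF v" unfolding cls_def by simp
  then show ?thesis using c by blast
qed

end

context psictx
begin

definition K where "K = {y\<in>R. psi (qconj y) \<in> PF v}"

lemma K_left: "left_ideal a b R K"
  unfolding left_ideal_def
proof (intro conjI ballI)
  show "K \<subseteq> R" unfolding K_def by blast
  show "qzero \<in> K" unfolding K_def using R_zero ps_zero by (simp add: conj_zero)
next
  fix x y assume x: "x \<in> K" and y: "y \<in> K"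
  have xr: "x \<in> R" "psi (qconj x) \<in> PF v" and yr: "y \<in> R" "psi (qconj y) \<in> PF v" using x y K_def by auto
  have "psi (qadd (qconj x) (qconj y)) - (psi (qconj x) + psi (qconj y)) \<in> PF v"
    using ps_add[OF Rc[OF xr(1)] Rc[OF yr(1)]] .
  from PF_add[OF this PF_add[OF xr(2) yr(2)]]
  have "psi (qconj (qadd x y)) \<in> PF v" by (simp add: conj_add)
  then show "qadd x y \<in> K" unfolding K_def using R_add[OF xr(1) yr(1)] by simp
next
  fix x assume x: "x \<in> K"
  have xr: "x \<in> R" "psi (qconj x) \<in> PF v" using x K_def by auto
  have "psi (qneg (qconj x)) + psi (qconj x) \<in> PF v" using ps_neg[OF Rc[OF xr(1)]] .
  from PF_sub[OF this xr(2)] have "psi (qconj (qneg x)) \<in> PF v" by (simp add: conj_neg)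
  then show "qneg x \<in> K" unfolding K_def using R_neg[OF xr(1)] by simp
next
  fix r x assume r: "r \<in> R" and x: "x \<in> K"
  have xr: "x \<in> R" "psi (qconj x) \<in> PF v" using x K_def by auto
  have 1: "psi (qmul a b (qconj x) (qconj r)) - psi (qconj x) * psi (qconj r) \<in> PF v"
    using ps_mul[OF Rc[OF xr(1)] Rc[OF r]] .
  have 2: "psi (qconj x) * psi (qconj r) \<in> PF v" using PF_mul[OF xr(2) ps_OF[OF Rc[OF r]]] .
  from PF_add[OF 1 2] have "psi (qconj (qmul a b r x)) \<in> PF v" by (simp add: conj_mul)
  then show "qmul a b r x \<in> K" unfolding K_def using R_mul[OF r xr(1)] by simp
qed

lemma K_max: "maximal_left_ideal a b R K"
  unfolding maximal_left_ideal_def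
proof (intro conjI allI impI)
  show "left_ideal a b R K" by (rule K_left)
  show "K \<noteq> R"
  proof
    assume "K = R"
    then have "qone \<in> K" using R_one by simp
    then show False unfolding K_def using ps_one_notin by (simp add: conj_one)
  qed
next
  fix I' assume h: "left_ideal a b R I' \<and> K \<subseteq> I'"
  have LI: "I' \<subseteq> R" "\<And>x y. x \<in> I' \<Longrightarrow> y \<in> I' \<Longrightarrow> qadd x y \<in> I'" "\<And>x. x \<in> I' \<Longrightarrow> qneg x \<in> I'"
    "\<And>r x. r \<in> R \<Longrightarrow> x \<in> I' \<Longrightarrow> qmul a b r x \<in> I'"
    using h unfolding left_ideal_def by auto
  have KI: "K \<subseteq> I'" using h by simp
  show "I' = K \<or> I' = R"
  proof (cases "I' \<subseteq> K")
    case True then show ?thesis using KI by blast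
  next
    case False
    then obtain y where y: "y \<in> I'" "y \<notin> K" by blast
    have yR: "y \<in> R" using y LI(1) by blast
    let ?e = "psi (qconj y)"
    have eO: "?e \<in> OF v" using ps_OF[OF Rc[OF yR]] .
    have eP: "?e \<notin> PF v" using y yR unfolding K_def by simp
    have ie: "inverse ?e \<in> OF v" using inv_OF[OF eO eP] .
    have ne: "?e \<noteq> 0" using unit_of[OF eO eP] by simp
    obtain z where z: "z \<in> R" "psi z - inverse ?e \<in> PF v" using ps_surj[OF ie] by blast
    let ?r = "qconj z"
    have rR: "?r \<in> R" using Rc[OF z(1)] .
    have ryI: "qmul a b ?r y \<in> I'" using LI(4)[OF rR y(1)] .
    have ryR: "qmul a b ?r y \<in> R" using R_mul[OF rR yR] .
    have cc: "qconj (qmul a b ?r y) = qmul a b (qconj y) z" by (simp add: conj_mul conj_conj)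
    have 1: "psi (qmul a b (qconj y) z) - ?e * psi z \<in> PF v" using ps_mul[OF Rc[OF yR] z(1)] .
    have 2: "?e * psi z - 1 \<in> PF v"
    proof -
      have "?e * (psi z - inverse ?e) \<in> PF v" using PF_mul2[OF eO z(2)] .
      then show ?thesis using ne by (simp add: algebra_simps)
    qed
    have 3: "psi (qconj (qmul a b ?r y)) - 1 \<in> PF v"
      using PF_add[OF 1 2] unfolding cc by simp
    let ?w = "qadd (qmul a b ?r y) (qneg qone)"
    have wR: "?w \<in> R" using R_add[OF ryR R_neg[OF R_one]] .
    have "psi (qadd (qconj (qmul a b ?r y)) (qneg qone)) - (psi (qconj (qmul a b ?r y)) - psi qone) \<in> PF v"
      using ps_sub[OF Rc[OF ryR] R_one] .
    from PF_add[OF this PF_sub[OF 3 ps_one]]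
    have "psi (qconj ?w) \<in> PF v" by (simp add: conj_add conj_neg conj_one)
    then have "?w \<in> K" unfolding K_def using wR by simp
    then have "qneg ?w \<in> I'" using KI LI(3) by blast
    from LI(2)[OF ryI this] have "qone \<in> I'" unfolding one_trick .
    then have "R \<subseteq> I'" using LI(4)[OF _ \<open>qone \<in> I'\<close>] unfolding mul_one by blast
    then show ?thesis using LI(1) by blast
  qed
qed

lemma J_conj: assumes x: "x \<in> R" "psi x \<in> PF v" shows "psi (qconj x) \<in> PF v"
proof -
  have "x \<in> jacobson a b R" using ps_jac x by blast
  then have "x \<in> K" using K_max unfolding jacobson_def by blast
  then show ?thesis unfolding K_def by simp
qed

lemma conj_cong: assumes x: "x \<in> R" shows "psi (qconj x) - psi x \<in> PF v"
proof -
  obtain c where c: "c \<in> OF v" "psi (sc c) - psi x \<in> PF v" using h_surj[OF ps_OF[OF x]] by blast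
  let ?j = "qadd x (qneg (sc c))"
  have jR: "?j \<in> R" using R_add[OF x R_neg[OF R_sc[OF c(1)]]] .
  have "psi ?j - (psi x - psi (sc c)) \<in> PF v" using ps_sub[OF x R_sc[OF c(1)]] .
  from PF_sub[OF this c(2)] have "psi ?j \<in> PF v" by simp
  from J_conj[OF jR this] have j1: "psi (qconj ?j) \<in> PF v" .
  have cj: "qconj ?j = qadd (qconj x) (qneg (sc c))" by (simp add: conj_add conj_neg conj_sc)
  have "psi (qconj ?j) - (psi (qconj x) - psi (sc c)) \<in> PF v"
    unfolding cj using ps_sub[OF Rc[OF x] R_sc[OF c(1)]] .
  from PF_sub[OF j1 this] have "psi (qconj x) - psi (sc c) \<in> PF v" by simp
  from PF_add[OF this c(2)] show ?thesis by simp
qed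

end

lemma ring_id: fixes y w i :: "'a::comm_ring_1"
  shows "(y - (y*y - w)*i)*(y - (y*y-w)*i) - w = (y*y-w) - y*(y*y-w)*(2*i) + (y*y-w)*(y*y-w)*(i*i)"
  by (simp add: algebra_simps)

lemma ring_id2: fixes y e j :: "'a::comm_ring_1"
  shows "e - y*e*1 + e*e*j = e*((1-y) + e*j)"
  by (simp add: algebra_simps)

context dval
begin

lemma hensel:
  assumes comp: "v_complete v" and two: "(2::'a) \<in> OF_units v" and w: "w - 1 \<in> PF v"
  shows "\<exists>L. L * L = w \<and> L - 1 \<in> PF v"
proof -
  have t2: "(2::'a) \<noteq> 0" "v 2 = 0" using two unfolding OF_units_def by auto
  have h: "inverse (2::'a) \<in> OF v" using vinv[OF t2(1)] t2 unfolding OF_def by simp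
  have q: "inverse (2::'a) * inverse 2 \<in> OF v" using OF_mul[OF h h] .
  define y where "y = rec_nat 1 (\<lambda>k yk. yk - (yk*yk - w) * inverse 2)"
  have y0: "y 0 = 1" and yS: "y (Suc k) = y k - (y k * y k - w) * inverse 2" for k
    unfolding y_def by simp_all
  have P: "y k - 1 \<in> PF v \<and> vge v (int k + 1) (y k * y k - w)" for k
  proof (induction k)
    case 0
    have "1 - w \<in> PF v" using PF_neg[OF w] by simp
    then show ?case using y0 PF_0 by (simp add: PF_vge)
  next
    case (Suc k)
    let ?e = "y k * y k - w" and ?y = "y k"
    have e: "vge v (int k + 1) ?e" using Suc by simp
    have eP: "?e \<in> PF v" using vge_mono[OF e] by (simp add: PF_vge)
    have y1: "?y - 1 \<in> PF v" using Suc by simp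
    have f: "(1 - ?y) + ?e * (inverse 2 * inverse 2) \<in> PF v"
      using PF_add[OF PF_neg[OF y1] PF_mul[OF eP q]] by simp
    have id: "y (Suc k) * y (Suc k) - w = ?e * ((1 - ?y) + ?e * (inverse 2 * inverse 2))"
    proof -
      let ?i = "inverse (2::'a)"
      have i2: "2 * ?i = 1" using t2(1) by simp
      have "(?y - ?e * ?i) * (?y - ?e * ?i) - w = ?e - ?y * ?e * (2 * ?i) + ?e * ?e * (?i * ?i)"
        by (rule ring_id)
      also have "\<dots> = ?e * ((1 - ?y) + ?e * (?i * ?i))" unfolding i2 by (rule ring_id2)
      finally show ?thesis unfolding yS .
    qed
    have "vge v (int k + 1 + 1) (?e * ((1 - ?y) + ?e * (inverse 2 * inverse 2)))"
      using vge_mul[OF e f[unfolded PF_vge]] .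
    then have 1: "vge v (int (Suc k) + 1) (y (Suc k) * y (Suc k) - w)" unfolding id by simp
    have "y (Suc k) - 1 = (?y - 1) - ?e * inverse 2" unfolding yS by simp
    then have 2: "y (Suc k) - 1 \<in> PF v" using PF_sub[OF y1 PF_mul[OF eP h]] by (simp only:)
    show ?case using 1 2 by simp
  qed
  have yO: "y k \<in> OF v" for k
    using OF_add[OF PF_OF[OF conjunct1[OF P[of k]]] OF_1] by simp
  have dstep: "vge v (int k + 1) (y (Suc k) - y k)" for k
  proof -
    have "y (Suc k) - y k = - ((y k * y k - w) * inverse 2)" unfolding yS by simp
    moreover have "vge v (int k + 1 + 0) ((y k * y k - w) * inverse 2)"
      using vge_mul[OF conjunct2[OF P[of k]] h[unfolded OF_vge]] .
    ultimately show ?thesis using vge_neg by simp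
  qed
  have tail: "vge v (int M + 1) (y m - y M)" if "M \<le> m" for M m
    using that
  proof (induction m rule: dec_induct)
    case base then show ?case by simp
  next
    case (step m)
    have "vge v (int M + 1) (y (Suc m) - y m)" using vge_mono[OF dstep[of m]] step(1) by simp
    from vge_add[OF this step(3)] show ?case by simp
  qed
  have cauchy: "\<forall>N. \<exists>M. \<forall>m\<ge>M. \<forall>n\<ge>M. vclose v N (y m) (y n)"
  proof
    fix N :: int
    have "vclose v N (y m) (y n)" if "nat N \<le> m" "nat N \<le> n" for m n
    proof -
      have "vge v (int (nat N) + 1) ((y m - y (nat N)) - (y n - y (nat N)))"
        using vge_sub[OF tail[OF that(1)] tail[OF that(2)]] .
      then have "vge v (int (nat N) + 1) (y m - y n)" by simp
      then have "vge v N (y m - y n)" by (rule vge_mono) simp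
      then show ?thesis unfolding vge_def vclose_def by auto
    qed
    then show "\<exists>M. \<forall>m\<ge>M. \<forall>n\<ge>M. vclose v N (y m) (y n)" by blast
  qed
  obtain L where L: "\<And>N. \<exists>M. \<forall>n\<ge>M. vclose v N (y n) L"
    using comp cauchy unfolding v_complete_def by blast
  have close: "vge v N (L * L - w) \<and> L - 1 \<in> PF v" if N: "N \<ge> 1" for N
  proof -
    obtain M where M: "\<forall>n\<ge>M. vclose v N (y n) L" using L by blast
    define n where "n = max M (nat N)"
    have "vclose v N (y n) L" using M n_def by simp
    then have d: "vge v N (y n - L)" unfolding vclose_def vge_def by auto
    have dP: "y n - L \<in> PF v" using vge_mono[OF d] N by (simp add: PF_vge)
    have LO: "L \<in> OF v" using OF_sub[OF yO[of n] PF_OF[OF dP]] by simp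
    have s: "vge v 0 (L + y n)" using OF_add[OF LO yO] by (simp add: OF_vge)
    have p: "vge v (N + 0) ((L - y n) * (L + y n))" using vge_mul[OF vge_neg[OF d] s] by simp
    have e: "vge v N (y n * y n - w)" using vge_mono[OF conjunct2[OF P[of n]]] n_def by simp
    have "L * L - w = (L - y n) * (L + y n) + (y n * y n - w)" by (simp add: algebra_simps)
    then have 1: "vge v N (L * L - w)" using vge_add[OF p[simplified] e] by (simp only:)
    have "L - 1 = (y n - 1) - (y n - L)" by simp
    then have 2: "L - 1 \<in> PF v" using PF_sub[OF conjunct1[OF P[of n]] dP] by simp
    show ?thesis using 1 2 by simp
  qed
  have "L * L = w"
  proof (rule ccontr)
    assume ne: "L * L \<noteq> w"
    have "vge v (max 1 (v (L*L - w) + 1)) (L * L - w)" using close by simp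
    then show False using ne unfolding vge_def by simp
  qed
  then show ?thesis using close[of 1] by auto
qed

end

context psictx
begin

lemma units_sq:
  assumes comp: "v_complete v" and x: "x \<in> qunits a b R"
  shows "\<exists>u. nrd a b x = u * u \<and> u \<in> OF_units v"
proof -
  obtain z where xR: "x \<in> R" and zR: "z \<in> R" and xz: "qmul a b x z = qone"
    using x unfolding qunits_def by blast
  let ?n = "nrd a b x"
  have nO: "?n \<in> OF v" using nrd_OF[OF xR] .
  have zO: "nrd a b z \<in> OF v" using nrd_OF[OF zR] .
  have nz1: "?n * nrd a b z = 1" using arg_cong[OF xz, of "nrd a b"] by (simp add: nrd_mult nrd_one)
  have nP: "?n \<notin> PF v"
  proof
    assume "?n \<in> PF v"
    from PF_mul[OF this zO] show False using nz1 one_notin_PF by simp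
  qed
  obtain c where c: "c \<in> OF v" "psi (sc c) - psi x \<in> PF v" using h_surj[OF ps_OF[OF xR]] by blast
  let ?px = "psi x" and ?pc = "psi (qconj x)" and ?s = "psi (sc c)"
  have pxO: "?px \<in> OF v" using ps_OF[OF xR] .
  have sO: "?s \<in> OF v" using ps_OF[OF R_sc[OF c(1)]] .
  have cc: "?pc - ?px \<in> PF v" using conj_cong[OF xR] .
  have 1: "psi (sc ?n) - ?px * ?pc \<in> PF v"
    using ps_mul[OF xR Rc[OF xR]] unfolding mul_conj .
  have 2: "psi (sc (c*c)) - ?s * ?s \<in> PF v"
    using ps_mul[OF R_sc[OF c(1)] R_sc[OF c(1)]] unfolding sc_mul .
  have 3: "psi (sc (?n - c*c)) - (psi (sc ?n) - psi (sc (c*c))) \<in> PF v"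
    unfolding sc_sub using ps_sub[OF R_sc[OF nO] R_sc[OF OF_mul[OF c(1) c(1)]]] .
  have 4: "?px * ?pc - ?s * ?s \<in> PF v"
  proof -
    have "?px * ?pc - ?s * ?s = ?px * (?pc - ?px) - (?s - ?px) * (?s + ?px)" by (simp add: algebra_simps)
    moreover have "?px * (?pc - ?px) - (?s - ?px) * (?s + ?px) \<in> PF v"
      using PF_sub[OF PF_mul2[OF pxO cc] PF_mul[OF c(2) OF_add[OF sO pxO]]] .
    ultimately show ?thesis by simp
  qed
  have "psi (sc (?n - c*c)) = (psi (sc (?n - c*c)) - (psi (sc ?n) - psi (sc (c*c))))
     + (psi (sc ?n) - ?px * ?pc) - (psi (sc (c*c)) - ?s * ?s) + (?px * ?pc - ?s * ?s)"
    by (simp add: algebra_simps)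
  then have "psi (sc (?n - c*c)) \<in> PF v" using PF_add[OF PF_sub[OF PF_add[OF 3 1] 2] 4] by simp
  then have ncP: "?n - c*c \<in> PF v" using ker_sc[OF OF_sub[OF nO OF_mul[OF c(1) c(1)]]] by blast
  have ccO: "c * c \<in> OF v" using OF_mul[OF c(1) c(1)] .
  have ccP: "c * c \<notin> PF v"
  proof
    assume "c * c \<in> PF v"
    from PF_add[OF ncP this] show False using nP by simp
  qed
  have cP: "c \<notin> PF v" using ccP PF_mul[OF _ c(1)] by blast
  have cu: "c \<noteq> 0" "v c = 0" using unit_of[OF c(1) cP] by auto
  have icc: "inverse (c*c) \<in> OF v" using inv_OF[OF ccO ccP] .
  define w where "w = ?n * inverse (c*c)"
  have "w - 1 = (?n - c*c) * inverse (c*c)" unfolding w_def using cu by (simp add: field_simps)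
  then have w1: "w - 1 \<in> PF v" using PF_mul[OF ncP icc] by simp
  obtain L where L: "L * L = w" "L - 1 \<in> PF v" using hensel[OF comp two w1] by blast
  have LO: "L \<in> OF v" using OF_add[OF PF_OF[OF L(2)] OF_1] by simp
  have LP: "L \<notin> PF v"
  proof
    assume "L \<in> PF v"
    from PF_sub[OF this L(2)] show False using one_notin_PF by simp
  qed
  have Lu: "L \<noteq> 0" "v L = 0" using unit_of[OF LO LP] by auto
  have "?n = (c * L) * (c * L)" using L(1) cu unfolding w_def by (simp add: field_simps)
  moreover have "c * L \<in> OF_units v" using cu Lu vmul unfolding OF_units_def by simp
  ultimately show ?thesis by blast
qed

end

theorem lemma3p4:
  fixes v :: "'a::field \<Rightarrow> int" and a b :: 'a and R :: "'a quat set"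
  assumes "nonarch_local_field v"
    and "nondyadic v"
    and "a \<noteq> 0" and "b \<noteq> 0"
    and "bass v a b R"
    and "eichler_zero v a b R"
  shows "nrd a b ` qunits a b R = {u * u | u. u \<in> OF_units v}"
proof -
  have dv: "discrete_valuation v" and comp: "v_complete v" and fr: "finite_residue_field v"
    using assms(1) unfolding nonarch_local_field_def by auto
  have ord: "is_order v a b R" using assms(5) unfolding bass_def by simp
  have two: "(2::'a) \<in> OF_units v" using assms(2) unfolding nondyadic_def .
  interpret ordctx v a b R using dv ord by unfold_locales
  obtain psi where ps: "\<forall>x\<in>R. psi x \<in> OF v"
        "\<forall>x\<in>R. \<forall>y\<in>R. psi (qadd x y) - (psi x + psi y) \<in> PF v"
        "\<forall>x\<in>R. \<forall>y\<in>R. psi (qmul a b x y) - psi x * psi y \<in> PF v"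
        "psi qone - 1 \<in> PF v"
        "\<forall>c\<in>OF v. \<exists>x\<in>R. psi x - c \<in> PF v"
        "\<forall>x\<in>R. psi x \<in> PF v \<longleftrightarrow> x \<in> jacobson a b R"
    using assms(6) unfolding eichler_zero_def by blast
  interpret psictx v a b R psi
    using two fr ps by unfold_locales auto
  show ?thesis
  proof
    show "nrd a b ` qunits a b R \<subseteq> {u * u | u. u \<in> OF_units v}"
      using units_sq[OF comp] by blast
  next
    show "{u * u | u. u \<in> OF_units v} \<subseteq> nrd a b ` qunits a b R"
    proof
      fix y assume "y \<in> {u * u | u. u \<in> OF_units v}"
      then obtain u where y: "y = u * u" and u: "u \<in> OF_units v" by blast
      have uz: "u \<noteq> 0" "v u = 0" using u unfolding OF_units_def by auto
      have uO: "u \<in> OF v" using uz unfolding OF_def by simp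
      have uP: "u \<notin> PF v" using uz unfolding PF_def by simp
      have iO: "inverse u \<in> OF v" using inv_OF[OF uO uP] .
      have "sc u \<in> qunits a b R"
        unfolding qunits_def using R_sc[OF uO] R_sc[OF iO] uz
        by (auto simp: sc_mul sc_one mult.commute intro!: bexI[of _ "sc (inverse u)"])
      moreover have "nrd a b (sc u) = y" using y by (simp add: nrd_sc)
      ultimately show "y \<in> nrd a b ` qunits a b R" by blast
    qed
  qed
qed

end
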